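(* Let $D=\sum_{s=1}^N\gamma_s\varpi_{i_s}[x_s]+\mu[\infty]$ be a $\Lambda^+$-valued divisor satisfying the integrality assumption, with $1\le i_N\le n-1$ (so $\gamma_N=1$), and let $D'=\sum_{s=1}^{N-1}\gamma_s\varpi_{i_s}[x_s]+(\mu+\varpi_{i_N})[\infty]$. Let $(-x_N)^{\varpi_{i_N}}$ denote the diagonal matrix $\mathrm{diag}(1,\dots,1,-x_N^{-1},\dots,-x_N^{-1})$ with $i_N$ entries equal to $1$ and $n-i_N$ entries equal to $-x_N^{-1}$. Then, treating $x_N$ as a parameter, the limit as $x_N\to\infty$ of $T_D(z)\cdot(-x_N)^{\varpi_{i_N}}$ (taken coefficientwise in the expansion in $z^{-1}$) equals $T_{D'}(z)$.
   Context: Let $n\ge2$, $\Lambda=\bigoplus_{j=1}^n\mathbb{Z}\epsilon_j$, $\epsilon^\vee_j$ dual basis, $\alpha^\vee_i=\epsilon^\vee_i-\epsilon^\vee_{i+1}$, $\alpha_i=\epsilon_i-\epsilon_{i+1}$, $\varpi_i=-\sum_{j=i+1}^n\epsilon_j$ ($0\le i\le n-1$), $\Lambda^+=\{\nu:\alpha^\vee_i(\nu)\ge0,\ 1\le i<n\}$. A $\Lambda^+$-valued divisor is $D=\sum_{s=1}^N\gamma_s\varpi_{i_s}[x_s]+\mu[\infty]$ with $0\le i_s\le n-1$, $x_s\in\mathbb{C}$, $\gamma_s=1$ if $i_s\ne0$, $\gamma_s\in\{\pm1\}$ if $i_s=0$, $\mu\in\Lambda^+$. Integrality assumption: with $\lambda=\sum_s\gamma_s\varpi_{i_s}$,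 $\lambda+\mu=\sum_{i=1}^{n-1}a_i\alpha_i$, $a_i\in\mathbb{Z}_{\ge0}$; $a_0=a_n=0$ (note $D$ and $D'$ give the same $a_i$). $\mathcal{A}$: the $\mathbb{C}$-algebra generated by $p_{i,r},e^{\pm q_{i,r}},(p_{i,r}-p_{i,s}+m)^{-1}$ ($1\le i<n$, $1\le r\ne s\le a_i$, $m\in\mathbb{Z}$) with $[e^{\pm q_{i,r}},p_{j,s}]=\mp\delta_{ij}\delta_{rs}e^{\pm q_{i,r}}$, $p$'s commuting, $e^q$'s commuting, $e^{\pm q_{i,r}}e^{\mp q_{i,r}}=1$. $Z_i(z)=\prod_{s:i_s=i}(z-x_s)^{\gamma_s}$, $P_j(z)=\prod_{r=1}^{a_j}(z-p_{j,r})$, $P_{j,r}(z)=\prod_{s\ne r}(z-p_{j,s})$, $P_0=P_n=1$. For such $D$, $T_D(z)\in\mathcal{A}((z^{-1}))\otimes\mathrm{End}\,\mathbb{C}^n$ is defined by $T_D(z)_{\alpha\beta}=\sum_{i=1}^{\min(\alpha,\beta)}f^D_{\alpha i}(z)g^D_i(z)e^D_{i\beta}(z)$, where (expanded in $z^{-1}$) $g^D_i(z)=\frac{P_i(z)}{P_{i-1}(z-1)}\prod_{k=0}^{i-1}Z_k(z)$, $e^D_{ii}=f^D_{ii}=1$ and for $i<j$: $e^D_{ij}(z)=-\sum_{r_i,\dots,r_{j-1}}\frac{P_{i-1}(p_{i,r_i}-1)\prod_{k=i}^{j-2}P_{k,r_k}(p_{k+1,r_{k+1}}-1)}{(z-p_{i,r_i})\prod_{k=i}^{j-1}P_{k,r_k}(p_{k,r_k})}\prod_{k=i}^{j-1}Z_k(p_{k,r_k})\,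 e^{\sum_{k=i}^{j-1}q_{k,r_k}}$, $f^D_{ji}(z)=\sum_{r_i,\dots,r_{j-1}}\frac{P_j(p_{j-1,r_{j-1}}+1)\prod_{k=i+1}^{j-1}P_{k,r_k}(p_{k-1,r_{k-1}}+1)}{(z-p_{i,r_i}-1)\prod_{k=i}^{j-1}P_{k,r_k}(p_{k,r_k})}\, e^{-\sum_{k=i}^{j-1}q_{k,r_k}}$ (sums over $1\le r_k\le a_k$); the $Z_k$ are those of the divisor in question. *)

theory Defs
  imports "HOL-Analysis.Analysis" "HOL-Computational_Algebra.Formal_Laurent_Series"
    "HOL-Library.FuncSet"
begin

(* Weights in Lambda = Z^n are functions nat => int; coordinate j (1 <= j <= n)
   is the coefficient of epsilon_j. *)

definition varpi :: "nat \<Rightarrow> nat \<Rightarrow> nat \<Rightarrow> int" where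
  "varpi n i j = (if i < j \<and> j \<le> n then -1 else 0)"

definition alpha :: "nat \<Rightarrow> nat \<Rightarrow> int" where
  "alpha i j = (if j = i then 1 else if j = i + 1 then -1 else 0)"

definition dominant :: "nat \<Rightarrow> (nat \<Rightarrow> int) \<Rightarrow> bool" where
  "dominant n \<nu> \<longleftrightarrow> (\<forall>i\<in>{1..<n}. \<nu> i - \<nu> (i + 1) \<ge> 0)"

(* A divisor sum_s gamma_s varpi_{i_s}[x_s] + mu[infinity] is given by the list of
   triples (gamma_s, i_s, x_s), s = 1..N, and mu. *)
definition is_divisor :: "nat \<Rightarrow> (int \<times> nat \<times> complex) list \<Rightarrow> (nat \<Rightarrow> int) \<Rightarrow> bool" where
  "is_divisor n pts mu \<longleftrightarrow>
     (\<forall>(\<gamma>, i, x) \<in> set pts. i \<le> n - 1 \<and> (i \<noteq> 0 \<longrightarrow> \<gamma> = 1) \<and> (i = 0 \<longrightarrow> \<gamma> = 1 \<or> \<gamma> = -1))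
     \<and> dominant n mu"

definition lam :: "nat \<Rightarrow> (int \<times> nat \<times> complex) list \<Rightarrow> nat \<Rightarrow> int" where
  "lam n pts j = (\<Sum>(\<gamma>, i, x) \<leftarrow> pts. \<gamma> * varpi n i j)"

definition integrality :: "nat \<Rightarrow> (int \<times> nat \<times> complex) list \<Rightarrow> (nat \<Rightarrow> int) \<Rightarrow> bool" where
  "integrality n pts mu \<longleftrightarrow>
     (\<exists>a :: nat \<Rightarrow> int. (\<forall>i\<in>{1..<n}. a i \<ge> 0) \<and>
        (\<forall>j\<in>{1..n}. lam n pts j + mu j = (\<Sum>i\<in>{1..<n}. a i * alpha i j)))"

definition acoef :: "nat \<Rightarrow> (int \<times> nat \<times> complex) list \<Rightarrow> (nat \<Rightarrow> int) \<Rightarrow> nat \<Rightarrow> nat" where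
  "acoef n pts mu = (\<lambda>i. nat ((THE a :: nat \<Rightarrow> int. (\<forall>i. i \<notin> {1..<n} \<longrightarrow> a i = 0) \<and>
        (\<forall>j\<in>{1..n}. lam n pts j + mu j = (\<Sum>i\<in>{1..<n}. a i * alpha i j))) i))"

(* Elements of the algebra A are written in normal form sum_k c_k(p) e^{k.q}
   (all e^q's to the right); c_k are rational functions of the p_{i,r}, which we
   evaluate at a numerical point p :: nat => nat => complex (p i r = value of p_{i,r}).
   A shift vector k :: nat => nat => int records the exponent of e^{q_{i,r}}. *)
definition generic :: "nat \<Rightarrow> (nat \<Rightarrow> nat) \<Rightarrow> (nat \<Rightarrow> nat \<Rightarrow> complex) \<Rightarrow> bool" where
  "generic n a p \<longleftrightarrow> (\<forall>i\<in>{1..<n}. \<forall>r\<in>{1..a i}. \<forall>s\<in>{1..a i}. r \<noteq> s \<longrightarrow> p i r - p i s \<notin> \<int>)"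

definition Pn :: "(nat \<Rightarrow> nat) \<Rightarrow> (nat \<Rightarrow> nat \<Rightarrow> complex) \<Rightarrow> nat \<Rightarrow> complex \<Rightarrow> complex" where
  "Pn a p j z = (\<Prod>r\<in>{1..a j}. (z - p j r))"

definition Pnr :: "(nat \<Rightarrow> nat) \<Rightarrow> (nat \<Rightarrow> nat \<Rightarrow> complex) \<Rightarrow> nat \<Rightarrow> nat \<Rightarrow> complex \<Rightarrow> complex" where
  "Pnr a p j r z = (\<Prod>s\<in>{1..a j} - {r}. (z - p j s))"

definition Zn :: "(int \<times> nat \<times> complex) list \<Rightarrow> nat \<Rightarrow> complex \<Rightarrow> complex" where
  "Zn pts k z = prod_list (map (\<lambda>(\<gamma>, i, x). if i = k then (z - x) powi \<gamma> else 1) pts)"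

(* the variable z as a Laurent series in z^{-1}: the series variable X stands for z^{-1} *)
abbreviation zz :: "complex fls" where "zz \<equiv> fls_X_inv"

definition Pf :: "(nat \<Rightarrow> nat) \<Rightarrow> (nat \<Rightarrow> nat \<Rightarrow> complex) \<Rightarrow> nat \<Rightarrow> complex \<Rightarrow> complex fls" where
  "Pf a p j c = (\<Prod>r\<in>{1..a j}. (zz - fls_const (p j r + c)))"

definition Zf :: "(int \<times> nat \<times> complex) list \<Rightarrow> nat \<Rightarrow> complex fls" where
  "Zf pts k = prod_list (map (\<lambda>(\<gamma>, i, x). if i = k then (zz - fls_const x) powi \<gamma> else 1) pts)"

definition gf :: "(nat \<Rightarrow> nat) \<Rightarrow> (int \<times> nat \<times> complex) list \<Rightarrow> (nat \<Rightarrow> nat \<Rightarrow> complex) \<Rightarrow> nat \<Rightarrow> complex fls" where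
  "gf a pts p i = Pf a p i 0 / Pf a p (i - 1) 1 * (\<Prod>k\<in>{0..<i}. Zf pts k)"

definition tuples :: "(nat \<Rightarrow> nat) \<Rightarrow> nat \<Rightarrow> nat \<Rightarrow> (nat \<Rightarrow> nat) set" where
  "tuples a i j = PiE {i..<j} (\<lambda>k. {1..a k})"

(* the exponent vector of e^{sum_{k=i}^{j-1} q_{k,r_k}} *)
definition chi :: "nat \<Rightarrow> nat \<Rightarrow> (nat \<Rightarrow> nat) \<Rightarrow> nat \<Rightarrow> nat \<Rightarrow> int" where
  "chi i j r = (\<lambda>k s. if i \<le> k \<and> k < j \<and> s = r k then 1 else 0)"

definition padd :: "(nat \<Rightarrow> nat \<Rightarrow> complex) \<Rightarrow> (nat \<Rightarrow> nat \<Rightarrow> int) \<Rightarrow> nat \<Rightarrow> nat \<Rightarrow> complex" where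
  "padd p c = (\<lambda>k s. p k s + of_int (c k s))"

(* scalar part (coefficient of e^{sum q_{k,r_k}}) of the (r_i..r_{j-1})-summand of e^D_{ij}(z), i<j *)
definition Eterm :: "(nat \<Rightarrow> nat) \<Rightarrow> (int \<times> nat \<times> complex) list \<Rightarrow> (nat \<Rightarrow> nat \<Rightarrow> complex)
    \<Rightarrow> nat \<Rightarrow> nat \<Rightarrow> (nat \<Rightarrow> nat) \<Rightarrow> complex fls" where
  "Eterm a pts p i j r = (if i = j then 1 else
     fls_const (- (Pn a p (i - 1) (p i (r i) - 1) *
                   (\<Prod>k\<in>{i..<j - 1}. Pnr a p k (r k) (p (k + 1) (r (k + 1)) - 1)))
                / (\<Prod>k\<in>{i..<j}. Pnr a p k (r k) (p k (r k)))
                * (\<Prod>k\<in>{i..<j}. Zn pts k (p k (r k))))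
     * inverse (zz - fls_const (p i (r i))))"

(* scalar part (coefficient of e^{-sum q_{k,r_k}}) of the (r_i..r_{j-1})-summand of f^D_{ji}(z), i<j *)
definition Fterm :: "(nat \<Rightarrow> nat) \<Rightarrow> (nat \<Rightarrow> nat \<Rightarrow> complex)
    \<Rightarrow> nat \<Rightarrow> nat \<Rightarrow> (nat \<Rightarrow> nat) \<Rightarrow> complex fls" where
  "Fterm a p j i r = (if i = j then 1 else
     fls_const ((Pn a p j (p (j - 1) (r (j - 1)) + 1) *
                 (\<Prod>k\<in>{i + 1..<j}. Pnr a p k (r k) (p (k - 1) (r (k - 1)) + 1)))
                / (\<Prod>k\<in>{i..<j}. Pnr a p k (r k) (p k (r k))))
     * inverse (zz - fls_const (p i (r i) + 1)))"

(* Tent n pts mu p alpha beta k : the coefficient of e^{k.q} (normal ordered, e^q on the right)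
   of T_D(z)_{alpha beta} = sum_i f_{alpha i} g_i e_{i beta}, as a Laurent series in z^{-1},
   evaluated at the point p.  Uses e^{-Q} S(p) = S(p + chi) e^{-Q}. *)
definition Tent :: "nat \<Rightarrow> (int \<times> nat \<times> complex) list \<Rightarrow> (nat \<Rightarrow> int) \<Rightarrow> (nat \<Rightarrow> nat \<Rightarrow> complex)
    \<Rightarrow> nat \<Rightarrow> nat \<Rightarrow> (nat \<Rightarrow> nat \<Rightarrow> int) \<Rightarrow> complex fls" where
  "Tent n pts mu p \<alpha> \<beta> k = (let a = acoef n pts mu in
     (\<Sum>i\<in>{1..min \<alpha> \<beta>}. \<Sum>rf\<in>tuples a i \<alpha>. \<Sum>re\<in>tuples a i \<beta>.
        if (\<lambda>u v. chi i \<beta> re u v - chi i \<alpha> rf u v) = k then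
          Fterm a p \<alpha> i rf * gf a pts (padd p (chi i \<alpha> rf)) i
            * Eterm a pts (padd p (chi i \<alpha> rf)) i \<beta> re
        else 0))"

definition diagent :: "nat \<Rightarrow> complex \<Rightarrow> nat \<Rightarrow> complex" where
  "diagent i x \<beta> = (if \<beta> \<le> i then 1 else - inverse x)"

end

theory Submission
  imports Defs
begin

lemma Zf_app: "Zf (D0 @ [(1, iN, x)]) k = Zf D0 k * (if k = iN then zz - fls_const x else 1)"
  by (auto simp: Zf_def)

lemma Zn_app: "Zn (D0 @ [(1, iN, x)]) k z = Zn D0 k z * (if k = iN then z - x else 1)"
  by (auto simp: Zn_def)

lemma gf_app: "gf a (D0 @ [(1, iN, x)]) q i = gf a D0 q i * (if iN < i then zz - fls_const x else 1)"
proof -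
  have "(\<Prod>k\<in>{0..<i}. Zf (D0 @ [(1, iN, x)]) k)
      = (\<Prod>k\<in>{0..<i}. Zf D0 k) * (\<Prod>k\<in>{0..<i}. (if k = iN then zz - fls_const x else 1))"
    by (simp add: Zf_app prod.distrib)
  also have "(\<Prod>k\<in>{0..<i}. (if k = iN then zz - fls_const x else 1)) = (if iN < i then zz - fls_const x else 1)"
    by (subst prod.delta) auto
  finally show ?thesis by (simp add: gf_def mult.assoc)
qed

lemma Eterm_app: "Eterm a (D0 @ [(1, iN, x)]) q i j r
   = Eterm a D0 q i j r * (if i \<le> iN \<and> iN < j then fls_const (q iN (r iN) - x) else 1)"
proof (cases "i = j")
  case True then show ?thesis by (auto simp: Eterm_def)
next
  case False
  have "(\<Prod>k\<in>{i..<j}. Zn (D0 @ [(1, iN, x)]) k (q k (r k)))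
      = (\<Prod>k\<in>{i..<j}. Zn D0 k (q k (r k))) * (\<Prod>k\<in>{i..<j}. (if k = iN then q k (r k) - x else 1))"
    by (simp add: Zn_app prod.distrib)
  also have "(\<Prod>k\<in>{i..<j}. (if k = iN then q k (r k) - x else 1)) = (if i \<le> iN \<and> iN < j then q iN (r iN) - x else 1)"
    by (subst prod.delta) auto
  finally have e: "(\<Prod>k\<in>{i..<j}. Zn (D0 @ [(1, iN, x)]) k (q k (r k)))
      = (\<Prod>k\<in>{i..<j}. Zn D0 k (q k (r k))) * (if i \<le> iN \<and> iN < j then q iN (r iN) - x else 1)" .
  have h: "fls_const (u * (v * w)) = fls_const (u * v) * fls_const w" for u v w :: complex
    by (simp only: fls_const_mult_const mult.assoc)
  show ?thesis using False
    unfolding Eterm_def e h by (auto simp: mult_ac)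
qed

lemma lam_app: "lam n (D0 @ [(1, iN, x)]) j = lam n D0 j + varpi n iN j"
  by (simp add: lam_def)

lemma acoef_app: "acoef n (D0 @ [(1, iN, x)]) mu = acoef n D0 (\<lambda>j. mu j + varpi n iN j)"
  unfolding acoef_def lam_app by (simp add: algebra_simps)

lemma summand_app:
  "Fterm a p0 \<alpha> i rf * gf a (D0 @ [(1, iN, x)]) q i * Eterm a (D0 @ [(1, iN, x)]) q i \<beta> re
   = Fterm a p0 \<alpha> i rf * gf a D0 q i * Eterm a D0 q i \<beta> re *
     ((if iN < i then zz - fls_const x else 1) * (if i \<le> iN \<and> iN < \<beta> then fls_const (q iN (re iN) - x) else 1))"
  by (simp add: gf_app Eterm_app mult_ac)

lemma Tent_small:
  assumes "\<beta> \<le> iN"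
  shows "Tent n (D0 @ [(1, iN, x)]) mu p \<alpha> \<beta> k = Tent n D0 (\<lambda>j. mu j + varpi n iN j) p \<alpha> \<beta> k"
  unfolding Tent_def Let_def acoef_app summand_app
  by (intro sum.cong refl) (use assms in auto)

lemma Tent_big:
  assumes "iN < \<beta>"
  shows "Tent n (D0 @ [(1, iN, x)]) mu p \<alpha> \<beta> k = Tent n (D0 @ [(1, iN, 0)]) mu p \<alpha> \<beta> k
     - fls_const x * Tent n D0 (\<lambda>j. mu j + varpi n iN j) p \<alpha> \<beta> k"
proof -
  have fac: "(if iN < i then zz - fls_const y else 1) * (if i \<le> iN \<and> iN < \<beta> then fls_const (c - y) else 1)
     = (if iN < i then zz else fls_const c) - fls_const y" if "i \<le> \<beta>" for i y and c :: complex
    using that assms by (auto simp: fls_minus_const[symmetric] simp del: fls_const_uminus)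
  have one: "(if P then Fterm a p0 \<alpha> i rf * gf a (D0 @ [(1, iN, x)]) q i * Eterm a (D0 @ [(1, iN, x)]) q i \<beta> re else 0)
    = (if P then Fterm a p0 \<alpha> i rf * gf a (D0 @ [(1, iN, 0)]) q i * Eterm a (D0 @ [(1, iN, 0)]) q i \<beta> re else 0)
      - fls_const x * (if P then Fterm a p0 \<alpha> i rf * gf a D0 q i * Eterm a D0 q i \<beta> re else 0)"
    if "i \<le> \<beta>" for P a p0 i rf q re
    unfolding summand_app fac[OF that] by (simp add: algebra_simps)
  have "Tent n (D0 @ [(1, iN, x)]) mu p \<alpha> \<beta> k =
    (\<Sum>i\<in>{1..min \<alpha> \<beta>}. \<Sum>rf\<in>tuples (acoef n D0 (\<lambda>j. mu j + varpi n iN j)) i \<alpha>. \<Sum>re\<in>tuples (acoef n D0 (\<lambda>j. mu j + varpi n iN j)) i \<beta>.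
      (if (\<lambda>u v. chi i \<beta> re u v - chi i \<alpha> rf u v) = k then
          Fterm (acoef n D0 (\<lambda>j. mu j + varpi n iN j)) p \<alpha> i rf * gf (acoef n D0 (\<lambda>j. mu j + varpi n iN j)) (D0 @ [(1, iN, 0)]) (padd p (chi i \<alpha> rf)) i
            * Eterm (acoef n D0 (\<lambda>j. mu j + varpi n iN j)) (D0 @ [(1, iN, 0)]) (padd p (chi i \<alpha> rf)) i \<beta> re
        else 0) - fls_const x * 
      (if (\<lambda>u v. chi i \<beta> re u v - chi i \<alpha> rf u v) = k then
          Fterm (acoef n D0 (\<lambda>j. mu j + varpi n iN j)) p \<alpha> i rf * gf (acoef n D0 (\<lambda>j. mu j + varpi n iN j)) D0 (padd p (chi i \<alpha> rf)) i
            * Eterm (acoef n D0 (\<lambda>j. mu j + varpi n iN j)) D0 (padd p (chi i \<alpha> rf)) i \<beta> re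
        else 0))"
    unfolding Tent_def Let_def acoef_app
    by (intro sum.cong refl one) auto
  then show ?thesis
    unfolding Tent_def Let_def acoef_app
    by (simp only: sum_subtractf sum_distrib_left)
qed

theorem proposition2p26:
  fixes n :: nat and D0 :: "(int \<times> nat \<times> complex) list" and gN :: int and iN :: nat
    and xN :: complex and mu :: "nat \<Rightarrow> int" and p :: "nat \<Rightarrow> nat \<Rightarrow> complex"
  assumes "n \<ge> 2"
    and "is_divisor n (D0 @ [(gN, iN, xN)]) mu"
    and "integrality n (D0 @ [(gN, iN, xN)]) mu"
    and "1 \<le> iN" and "iN \<le> n - 1"
    and "generic n (acoef n (D0 @ [(gN, iN, xN)]) mu) p"
  shows "\<forall>\<alpha>\<in>{1..n}. \<forall>\<beta>\<in>{1..n}. \<forall>k m.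
     ((\<lambda>x. fls_nth (Tent n (D0 @ [(gN, iN, x)]) mu p \<alpha> \<beta> k * fls_const (diagent iN x \<beta>)) m)
        \<longlongrightarrow> fls_nth (Tent n D0 (\<lambda>j. mu j + varpi n iN j) p \<alpha> \<beta> k) m) at_infinity"
proof (intro ballI allI)
  fix \<alpha> \<beta> k m
  have g: "gN = 1" using assms(2,4) by (auto simp: is_divisor_def)
  define T' where "T' = Tent n D0 (\<lambda>j. mu j + varpi n iN j) p \<alpha> \<beta> k"
  define C where "C = Tent n (D0 @ [(1, iN, 0)]) mu p \<alpha> \<beta> k"
  show "((\<lambda>x. fls_nth (Tent n (D0 @ [(gN, iN, x)]) mu p \<alpha> \<beta> k * fls_const (diagent iN x \<beta>)) m)
        \<longlongrightarrow> fls_nth (Tent n D0 (\<lambda>j. mu j + varpi n iN j) p \<alpha> \<beta> k) m) at_infinity"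
  proof (cases "\<beta> \<le> iN")
    case True
    then show ?thesis by (simp add: g Tent_small diagent_def)
  next
    case False
    have ev: "\<forall>\<^sub>F x in at_infinity. fls_nth T' m - inverse x * fls_nth C m
       = fls_nth (Tent n (D0 @ [(gN, iN, x)]) mu p \<alpha> \<beta> k * fls_const (diagent iN x \<beta>)) m"
    proof -
      have "\<forall>\<^sub>F x in at_infinity. (x::complex) \<noteq> 0"
        using eventually_at_infinity[of "\<lambda>x::complex. x \<noteq> 0"] by (metis norm_zero zero_less_one not_le)
      then show ?thesis
      proof (rule eventually_mono)
        fix x :: complex assume "x \<noteq> 0"
        then show "fls_nth T' m - inverse x * fls_nth C m
          = fls_nth (Tent n (D0 @ [(gN, iN, x)]) mu p \<alpha> \<beta> k * fls_const (diagent iN x \<beta>)) m"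
          using False by (simp add: g Tent_big diagent_def T'_def[symmetric] C_def[symmetric] algebra_simps)
      qed
    qed
    have "((\<lambda>x. fls_nth T' m - inverse x * fls_nth C m) \<longlongrightarrow> fls_nth T' m - 0 * fls_nth C m) at_infinity"
      by (intro tendsto_intros tendsto_inverse_0)
    then have "((\<lambda>x. fls_nth T' m - inverse x * fls_nth C m) \<longlongrightarrow> fls_nth T' m) at_infinity" by simp
    then show ?thesis using ev unfolding T'_def by (rule tendsto_cong[THEN iffD1, rotated])
  qed
qed

end
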